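(* Under the standing assumptions (A1)–(A6) below, the aNETT regularizer $\mathcal R\colon \mathbb X\to[0,\infty]$, $\mathcal R(x)=\psi(\mathbf E(x))+\frac{c}{2}\|x-\mathbf D(\mathbf E(x))\|^2$, is coercive.
   Context: Standing assumptions (A1)–(A6): (A1) $\mathbb X,\mathbb Y$ are real Hilbert spaces; (A2) $\Xi=\ell^2(\Lambda)$ for a countable index set $\Lambda$; (A3) $\mathbf K\colon\mathbb X\to\mathbb Y$ is (possibly nonlinear and) weakly sequentially continuous; (A4) the encoder $\mathbf E\colon\mathbb X\to\Xi$ is weakly sequentially continuous; (A5) the decoder $\mathbf D\colon\Xi\to\mathbb X$ is weakly sequentially continuous; (A6) $\psi\colon\Xi\to[0,\infty]$ is coercive and weakly sequentially lower semicontinuous. A constant $c>0$ is fixed. A functional $F\colon H\to[0,\infty]$ on a normed space is called coercive if every sequence $(x_n)$ with $(F(x_n))_n$ bounded is itself bounded in norm. *)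

theory Defs
  imports "HOL-Analysis.Analysis" "HOL-Library.Extended_Nonnegative_Real"
begin

definition l2 :: "('l \<Rightarrow> real) set" where
  "l2 = {f. (\<lambda>i. (f i)\<^sup>2) summable_on UNIV}"

definition l2_inner :: "('l \<Rightarrow> real) \<Rightarrow> ('l \<Rightarrow> real) \<Rightarrow> real" where
  "l2_inner f g = infsum (\<lambda>i. f i * g i) UNIV"

definition l2_norm :: "('l \<Rightarrow> real) \<Rightarrow> real" where
  "l2_norm f = sqrt (infsum (\<lambda>i. (f i)\<^sup>2) UNIV)"

definition l2_wconv :: "(nat \<Rightarrow> ('l \<Rightarrow> real)) \<Rightarrow> ('l \<Rightarrow> real) \<Rightarrow> bool" where
  "l2_wconv xs x \<longleftrightarrow> (\<forall>n. xs n \<in> l2) \<and> x \<in> l2 \<and>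
     (\<forall>y\<in>l2. (\<lambda>n. l2_inner (xs n) y) \<longlonglongrightarrow> l2_inner x y)"

definition hwconv :: "(nat \<Rightarrow> 'a::real_inner) \<Rightarrow> 'a \<Rightarrow> bool" where
  "hwconv xs x \<longleftrightarrow> (\<forall>y. (\<lambda>n. inner (xs n) y) \<longlonglongrightarrow> inner x y)"

definition weakly_seq_cont :: "('a::real_inner \<Rightarrow> 'b::real_inner) \<Rightarrow> bool" where
  "weakly_seq_cont f \<longleftrightarrow> (\<forall>xs x. hwconv xs x \<longrightarrow> hwconv (\<lambda>n. f (xs n)) (f x))"

definition weakly_seq_cont_enc :: "('a::real_inner \<Rightarrow> ('l \<Rightarrow> real)) \<Rightarrow> bool" where
  "weakly_seq_cont_enc E \<longleftrightarrow> (\<forall>x. E x \<in> l2) \<and>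
     (\<forall>xs x. hwconv xs x \<longrightarrow> l2_wconv (\<lambda>n. E (xs n)) (E x))"

definition weakly_seq_cont_dec :: "(('l \<Rightarrow> real) \<Rightarrow> 'a::real_inner) \<Rightarrow> bool" where
  "weakly_seq_cont_dec D \<longleftrightarrow> (\<forall>xs x. l2_wconv xs x \<longrightarrow> hwconv (\<lambda>n. D (xs n)) (D x))"

definition coercive_l2 :: "(('l \<Rightarrow> real) \<Rightarrow> ennreal) \<Rightarrow> bool" where
  "coercive_l2 F \<longleftrightarrow> (\<forall>xs::nat \<Rightarrow> ('l \<Rightarrow> real). (\<forall>n. xs n \<in> l2) \<longrightarrow> (\<exists>M::real. \<forall>n. F (xs n) \<le> ennreal M)
       \<longrightarrow> (\<exists>B::real. \<forall>n. l2_norm (xs n) \<le> B))"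

definition coercive :: "('a::real_normed_vector \<Rightarrow> ennreal) \<Rightarrow> bool" where
  "coercive F \<longleftrightarrow> (\<forall>xs::nat \<Rightarrow> 'a. (\<exists>M::real. \<forall>n. F (xs n) \<le> ennreal M)
       \<longrightarrow> (\<exists>B::real. \<forall>n. norm (xs n) \<le> B))"

definition weakly_seq_lsc_l2 :: "(('l \<Rightarrow> real) \<Rightarrow> ennreal) \<Rightarrow> bool" where
  "weakly_seq_lsc_l2 F \<longleftrightarrow> (\<forall>xs x. l2_wconv xs x \<longrightarrow> F x \<le> liminf (\<lambda>n. F (xs n)))"

definition aNETT_reg :: "(('l \<Rightarrow> real) \<Rightarrow> ennreal) \<Rightarrow> ('a::real_normed_vector \<Rightarrow> ('l \<Rightarrow> real))
    \<Rightarrow> (('l \<Rightarrow> real) \<Rightarrow> 'a) \<Rightarrow> real \<Rightarrow> 'a \<Rightarrow> ennreal" where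
  "aNETT_reg \<psi> E D c x = \<psi> (E x) + ennreal (c / 2 * (norm (x - D (E x)))\<^sup>2)"

end

theory Submission
  imports Defs "HOL-Library.Diagonal_Subsequence"
begin


lemma baire_nat:
  fixes F :: "nat \<Rightarrow> 'a::{real_normed_vector,complete_space} set"
  assumes clF: "\<And>k. closed (F k)" and U: "\<Union>(range F) = UNIV"
  shows "\<exists>k x0 r. r > 0 \<and> ball x0 r \<subseteq> F k"
proof -
  have "\<exists>T\<in>range F. \<not> (closedin euclidean T \<and> euclidean interior_of T = {})"
  proof (rule ccontr)
    assume "\<not> ?thesis"
    then have H: "\<And>T. T \<in> range F \<Longrightarrow> closedin euclidean T \<and> euclidean interior_of T = {}" by blast
    have "euclidean interior_of \<Union>(range F) = {}"
      apply (rule Baire_category_alt[where X=euclidean])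
        apply (rule disjI1, rule completely_metrizable_space_euclidean)
       apply simp
      by (rule H)
    then show False using U by simp
  qed
  then obtain k where "\<not> (closedin euclidean (F k) \<and> euclidean interior_of (F k) = {})" by blast
  moreover have "closedin euclidean (F k)" using clF[of k] closed_closedin by blast
  ultimately have "euclidean interior_of (F k) \<noteq> {}" by blast
  then obtain x0 where x0: "x0 \<in> euclidean interior_of (F k)" by blast
  have "open (euclidean interior_of (F k))" by (metis open_openin openin_interior_of)
  then obtain r where r: "r > 0" "ball x0 r \<subseteq> euclidean interior_of (F k)"
    using x0 open_contains_ball by blast
  have "ball x0 r \<subseteq> F k" using r(2) interior_of_subset[of euclidean "F k"] by (rule order.trans)
  then show ?thesis using r by blast
qed

lemma ub_weak:
  fixes u :: "nat \<Rightarrow> 'a::{real_inner,complete_space}"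
  assumes "hwconv u v" shows "\<exists>B. \<forall>n. norm (u n) \<le> B"
proof -
  have bnd: "\<exists>k::nat. \<forall>n. \<bar>inner (u n) y\<bar> \<le> real k" for y
  proof -
    have "(\<lambda>n. inner (u n) y) \<longlonglongrightarrow> inner v y" using assms unfolding hwconv_def by blast
    then have "Bseq (\<lambda>n. inner (u n) y)" using convergent_def convergent_imp_Bseq by blast
    then obtain K where "\<forall>n. norm (inner (u n) y) \<le> K" unfolding Bseq_def by blast
    then have "\<forall>n. \<bar>inner (u n) y\<bar> \<le> real (nat \<lceil>K\<rceil>)"
      by (metis order.trans real_nat_ceiling_ge real_norm_def)
    then show ?thesis by blast
  qed
  define F where "F k = {y. \<forall>n. \<bar>inner (u n) y\<bar> \<le> real k}" for k :: nat
  have clF: "closed (F k)" for k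
  proof -
    have "F k = (\<Inter>n. {y. \<bar>inner (u n) y\<bar> \<le> real k})" unfolding F_def by auto
    moreover have "closed {y. \<bar>inner (u n) y\<bar> \<le> real k}" for n
      by (intro closed_Collect_le continuous_intros)
    ultimately show ?thesis by auto
  qed
  have U: "\<Union>(range F) = UNIV" using bnd unfolding F_def by auto
  obtain k x0 r where r: "r>0" and rF: "ball x0 r \<subseteq> F k" using baire_nat[OF clF U] by blast
  have "norm (u n) \<le> 4 * real k / r" for n
  proof (cases "u n = 0")
    case True then show ?thesis using r by simp
  next
    case False
    define h where "h = (r/2 / norm (u n)) *\<^sub>R u n"
    have nh: "norm h = r/2" using False r unfolding h_def by simp
    have "x0 + h \<in> ball x0 r" using nh r by (simp add: dist_norm)
    then have "\<bar>inner (u n) (x0 + h)\<bar> \<le> real k" using rF unfolding F_def by blast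
    moreover have "\<bar>inner (u n) x0\<bar> \<le> real k" using rF r centre_in_ball[of x0 r] unfolding F_def by blast
    moreover have "inner (u n) (x0 + h) = inner (u n) x0 + r/2 * norm (u n)"
      proof -
      have "inner (u n) h = (r/2 / norm (u n)) * (norm (u n))\<^sup>2"
        unfolding h_def by (simp add: power2_norm_eq_inner)
      also have "\<dots> = r/2 * norm (u n)" using False by (simp add: power2_eq_square)
      finally show ?thesis by (simp add: inner_add_right)
    qed
    ultimately have "r/2 * norm (u n) \<le> 2 * real k" by linarith
    then show ?thesis using r by (simp add: field_simps)
  qed
  then show ?thesis by blast
qed



lemma l2_sq_summable: "f \<in> l2 \<Longrightarrow> (\<lambda>i. (f i)\<^sup>2) summable_on A"
  unfolding l2_def using summable_on_subset by blast

lemma l2_infsum_nonneg: "infsum (\<lambda>i. (f i)\<^sup>2) A \<ge> (0::real)"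
  by (rule infsum_nonneg) simp

lemma l2_coord: "f \<in> l2 \<Longrightarrow> (f i)\<^sup>2 \<le> infsum (\<lambda>i. (f i)\<^sup>2) UNIV"
  using finite_sum_le_infsum[of "\<lambda>i. (f i)\<^sup>2" UNIV "{i}"] l2_sq_summable[of f UNIV] by simp

lemma l2_sq_mono: "f \<in> l2 \<Longrightarrow> infsum (\<lambda>i. (f i)\<^sup>2) A \<le> infsum (\<lambda>i. (f i)\<^sup>2) UNIV"
  by (rule infsum_mono2) (auto intro: l2_sq_summable)

lemma pw_bound:
  fixes a b t :: real assumes "t > 0"
  shows "\<bar>a * b\<bar> \<le> t/2 * a\<^sup>2 + 1/(2*t) * b\<^sup>2"
proof -
  have "0 \<le> (t*\<bar>a\<bar> - \<bar>b\<bar>)\<^sup>2" by simp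
  then have "2*t*\<bar>a*b\<bar> \<le> t\<^sup>2*a\<^sup>2 + b\<^sup>2"
    by (simp add: power2_eq_square abs_mult algebra_simps)
  then have "2*t*\<bar>a*b\<bar> / (2*t) \<le> (t\<^sup>2*a\<^sup>2 + b\<^sup>2) / (2*t)" using assms
    by (intro divide_right_mono) auto
  then show ?thesis using assms by (simp add: field_simps power2_eq_square)
qed

lemma prod_bound:
  assumes f: "f \<in> l2" and g: "g \<in> l2" and t: "t > 0"
  shows "(\<lambda>i. f i * g i) summable_on A"
    and "\<bar>infsum (\<lambda>i. f i * g i) A\<bar> \<le> t/2 * infsum (\<lambda>i. (f i)\<^sup>2) A + 1/(2*t) * infsum (\<lambda>i. (g i)\<^sup>2) A"
proof -
  define h where "h i = t/2 * (f i)\<^sup>2 + 1/(2*t) * (g i)\<^sup>2" for i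
  have hs: "h summable_on A" unfolding h_def
    by (intro summable_on_add summable_on_cmult_right l2_sq_summable f g)
  have hn: "h i \<ge> 0" for i unfolding h_def using t by simp
  have pw: "\<bar>f i * g i\<bar> \<le> h i" for i unfolding h_def using pw_bound[OF t] .
  have "(\<lambda>i. norm (f i * g i)) summable_on A"
    by (rule summable_on_comparison_test[OF hs]) (use pw in auto)
  then show fs: "(\<lambda>i. f i * g i) summable_on A" using summable_on_iff_abs_summable_on_real by blast
  have "norm (infsum (\<lambda>i. f i * g i) A) \<le> infsum h A"
    using norm_infsum_le[OF has_sum_infsum[OF fs] has_sum_infsum[OF hs]] pw by simp
  also have "infsum h A = t/2 * infsum (\<lambda>i. (f i)\<^sup>2) A + 1/(2*t) * infsum (\<lambda>i. (g i)\<^sup>2) A"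
  proof -
    have s1: "(\<lambda>i. t/2 * (f i)\<^sup>2) summable_on A" by (intro summable_on_cmult_right l2_sq_summable f)
    have s2: "(\<lambda>i. 1/(2*t) * (g i)\<^sup>2) summable_on A" by (intro summable_on_cmult_right l2_sq_summable g)
    have "infsum h A = infsum (\<lambda>i. t/2 * (f i)\<^sup>2) A + infsum (\<lambda>i. 1/(2*t) * (g i)\<^sup>2) A"
      unfolding h_def by (rule infsum_add[OF s1 s2])
    also have "\<dots> = t/2 * infsum (\<lambda>i. (f i)\<^sup>2) A + 1/(2*t) * infsum (\<lambda>i. (g i)\<^sup>2) A"
      using infsum_cmult_right[of "t/2" "\<lambda>i. (f i)\<^sup>2" A] infsum_cmult_right[of "1/(2*t)" "\<lambda>i. (g i)\<^sup>2" A]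
        l2_sq_summable[OF f] l2_sq_summable[OF g] by simp
    finally show ?thesis .
  qed
  finally show "\<bar>infsum (\<lambda>i. f i * g i) A\<bar> \<le> t/2 * infsum (\<lambda>i. (f i)\<^sup>2) A + 1/(2*t) * infsum (\<lambda>i. (g i)\<^sup>2) A" by simp
qed

lemma split_infsum:
  fixes h :: "'l \<Rightarrow> real"
  assumes "h summable_on UNIV" "finite F"
  shows "infsum h UNIV = sum h F + infsum h (-F)"
proof -
  have "infsum h (F \<union> -F) = infsum h F + infsum h (-F)"
    by (rule infsum_Un_disjoint) (auto intro: summable_on_subset[OF assms(1)])
  then show ?thesis using assms(2) by simp
qed

lemma tail_small:
  fixes g :: "'l \<Rightarrow> real"
  assumes "g \<in> l2" "e > 0"
  shows "\<exists>F. finite F \<and> infsum (\<lambda>i. (g i)\<^sup>2) (-F) \<le> e"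
proof -
  let ?h = "\<lambda>i. (g i)\<^sup>2"
  have hs: "?h summable_on UNIV" using assms(1) unfolding l2_def by simp
  have "((\<lambda>F. sum ?h F) \<longlongrightarrow> infsum ?h UNIV) (finite_subsets_at_top UNIV)"
    by (rule infsum_tendsto[OF hs])
  then have "\<forall>\<^sub>F F in finite_subsets_at_top UNIV. dist (sum ?h F) (infsum ?h UNIV) < e"
    using assms(2) tendstoD by blast
  then obtain F where F: "finite F" "dist (sum ?h F) (infsum ?h UNIV) < e"
    unfolding eventually_finite_subsets_at_top by blast
  have "infsum ?h UNIV = sum ?h F + infsum ?h (-F)" using split_infsum[OF hs F(1)] .
  then show ?thesis using F by (intro exI[of _ F]) (auto simp: dist_real_def)
qed




lemma tail_bound:
  assumes f: "f \<in> l2" and y: "y \<in> l2" and fC: "infsum (\<lambda>i. (f i)\<^sup>2) UNIV \<le> C" and C: "C \<ge> 0"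
    and e: "e > 0" and t: "t = e / (3 * (C + 1))"
    and yF: "infsum (\<lambda>i. (y i)\<^sup>2) (-F) \<le> t * e / 3"
  shows "\<bar>infsum (\<lambda>i. f i * y i) (-F)\<bar> < e/3"
proof -
  have tp: "t > 0" using t e C by simp
  have "\<bar>infsum (\<lambda>i. f i * y i) (-F)\<bar> \<le> t/2 * infsum (\<lambda>i. (f i)\<^sup>2) (-F) + 1/(2*t) * infsum (\<lambda>i. (y i)\<^sup>2) (-F)"
    by (rule prod_bound(2)[OF f y tp])
  also have "\<dots> \<le> t/2 * C + 1/(2*t) * (t * e / 3)"
  proof (intro add_mono mult_left_mono)
    show "infsum (\<lambda>i. (f i)\<^sup>2) (-F) \<le> C" using l2_sq_mono[OF f, of "-F"] fC by linarith
  qed (use tp yF in auto)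
  also have "\<dots> = e * C / (6 * (C+1)) + e/6"
  proof -
    have "1/(2*t) * (t * e / 3) = e/6" using tp by (simp add: field_simps)
    moreover have "t/2 * C = e * C / (6 * (C+1))" unfolding t by (simp add: field_simps)
    ultimately show ?thesis by linarith
  qed
  also have "\<dots> < e/6 + e/6"
  proof -
    have "e * C / (6 * (C+1)) < e/6" using e C by (simp add: field_simps)
    then show ?thesis by linarith
  qed
  finally show ?thesis by simp
qed

lemma l2_weak_compact:
  fixes z :: "nat \<Rightarrow> 'l::countable \<Rightarrow> real"
  assumes zl: "\<And>n. z n \<in> l2" and zb: "\<And>n. infsum (\<lambda>i. (z n i)\<^sup>2) UNIV \<le> C"
  shows "\<exists>r a. strict_mono r \<and> l2_wconv (\<lambda>n. z (r n)) a"
proof -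
  have C0: "C \<ge> 0" using zb[of 0] l2_infsum_nonneg[of "z 0" UNIV] by linarith
  have cb: "\<bar>z n i\<bar> \<le> sqrt C" for n i
  proof -
    have "(z n i)\<^sup>2 \<le> C" using l2_coord[OF zl, of n i] zb[of n] by linarith
    then have "sqrt ((z n i)\<^sup>2) \<le> sqrt C" by (rule real_sqrt_le_mono)
    then show ?thesis by simp
  qed
  interpret S: subseqs "\<lambda>k s. convergent (\<lambda>n. z (s n) (from_nat k))"
  proof
    fix k and s :: "nat \<Rightarrow> nat" assume "strict_mono s"
    have "bounded (range (\<lambda>n. z (s n) (from_nat k)))"
      by (rule boundedI[where B="sqrt C"]) (use cb in auto)
    then obtain l r where "strict_mono r" "((\<lambda>n. z (s n) (from_nat k)) \<circ> r) \<longlonglongrightarrow> l"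
      using bounded_imp_convergent_subsequence by blast
    then show "\<exists>r'. strict_mono r' \<and> convergent (\<lambda>n. z ((s \<circ> r') n) (from_nat k))"
      by (auto simp: convergent_def o_def)
  qed
  define d where "d = S.diagseq"
  have dm: "strict_mono d" unfolding d_def by (rule S.subseq_diagseq)
  have conv: "convergent (\<lambda>n. z (d n) i)" for i
  proof -
    have "convergent (\<lambda>n. z ((S.diagseq \<circ> (+) (Suc (to_nat i))) n) (from_nat (to_nat i)))"
      apply (rule S.diagseq_holds)
      subgoal for r s n using convergent_subseq_convergent[of "\<lambda>m. z (s m) (from_nat n)" r] by (simp add: o_def)
      done
    then have "convergent (\<lambda>n. z (d (n + Suc (to_nat i))) i)" by (simp add: o_def d_def add.commute)
    then show ?thesis by (rule iffD1[OF convergent_ignore_initial_segment])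
  qed
  define a where "a i = lim (\<lambda>n. z (d n) i)" for i
  have pw: "(\<lambda>n. z (d n) i) \<longlonglongrightarrow> a i" for i
    unfolding a_def using conv convergent_LIMSEQ_iff by blast
  have finb: "sum (\<lambda>i. (a i)\<^sup>2) F \<le> C" if "finite F" for F
  proof (rule LIMSEQ_le_const2)
    show "(\<lambda>n. sum (\<lambda>i. (z (d n) i)\<^sup>2) F) \<longlonglongrightarrow> sum (\<lambda>i. (a i)\<^sup>2) F"
      by (intro tendsto_intros pw)
    show "\<exists>N. \<forall>n\<ge>N. sum (\<lambda>i. (z (d n) i)\<^sup>2) F \<le> C"
    proof (intro exI allI impI)
      fix n
      have "sum (\<lambda>i. (z (d n) i)\<^sup>2) F \<le> infsum (\<lambda>i. (z (d n) i)\<^sup>2) UNIV"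
        by (rule finite_sum_le_infsum) (use that l2_sq_summable[OF zl] in auto)
      then show "sum (\<lambda>i. (z (d n) i)\<^sup>2) F \<le> C" using zb[of "d n"] by linarith
    qed
  qed
  have as: "(\<lambda>i. (a i)\<^sup>2) summable_on UNIV"
    by (rule nonneg_bdd_above_summable_on) (auto intro!: bdd_aboveI2[where M=C] finb)
  then have al: "a \<in> l2" unfolding l2_def by simp
  have aC: "infsum (\<lambda>i. (a i)\<^sup>2) UNIV \<le> C"
    by (rule infsum_le_finite_sums[OF as]) (use finb in auto)
  have wc: "(\<lambda>n. l2_inner (z (d n)) y) \<longlonglongrightarrow> l2_inner a y" if yl: "y \<in> l2" for y
  proof (rule LIMSEQ_I)
    fix e :: real assume e: "e > 0"
    define t where "t = e / (3 * (C + 1))"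
    have tp: "t > 0" using e C0 unfolding t_def by simp
    obtain F where F: "finite F" "infsum (\<lambda>i. (y i)\<^sup>2) (-F) \<le> t * e / 3"
      using tail_small[OF yl, of "t * e / 3"] tp e by auto
    have lim: "(\<lambda>n. \<Sum>i\<in>F. z (d n) i * y i) \<longlonglongrightarrow> (\<Sum>i\<in>F. a i * y i)"
      by (intro tendsto_intros pw)
    have e3: "e/3 > 0" using e by simp
    obtain N where N0: "\<forall>n\<ge>N. norm ((\<Sum>i\<in>F. z (d n) i * y i) - (\<Sum>i\<in>F. a i * y i)) < e/3"
      using LIMSEQ_D[OF lim e3] by blast
    then have N: "\<And>n. n \<ge> N \<Longrightarrow> norm ((\<Sum>i\<in>F. z (d n) i * y i) - (\<Sum>i\<in>F. a i * y i)) < e/3" by blast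
    have "norm (l2_inner (z (d n)) y - l2_inner a y) < e" if "n \<ge> N" for n
    proof -
      have s1: "l2_inner (z (d n)) y = (\<Sum>i\<in>F. z (d n) i * y i) + infsum (\<lambda>i. z (d n) i * y i) (-F)"
        unfolding l2_inner_def by (rule split_infsum[OF prod_bound(1)[OF zl yl tp] F(1)])
      have s2: "l2_inner a y = (\<Sum>i\<in>F. a i * y i) + infsum (\<lambda>i. a i * y i) (-F)"
        unfolding l2_inner_def by (rule split_infsum[OF prod_bound(1)[OF al yl tp] F(1)])
      have b1: "\<bar>infsum (\<lambda>i. z (d n) i * y i) (-F)\<bar> < e/3"
        by (rule tail_bound[OF zl yl zb C0 e t_def F(2)])
      have b2: "\<bar>infsum (\<lambda>i. a i * y i) (-F)\<bar> < e/3"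
        by (rule tail_bound[OF al yl aC C0 e t_def F(2)])
      show ?thesis using N[OF that] b1 b2 unfolding s1 s2 real_norm_def by arith
    qed
    then show "\<exists>N. \<forall>n\<ge>N. norm (l2_inner (z (d n)) y - l2_inner a y) < e" by blast
  qed
  have "l2_wconv (\<lambda>n. z (d n)) a" unfolding l2_wconv_def using zl al wc by blast
  then show ?thesis using dm by blast
qed




lemma dec_bounded:
  fixes D :: "('l::countable \<Rightarrow> real) \<Rightarrow> 'x::{real_inner,complete_space}"
  assumes A5: "weakly_seq_cont_dec D" and zl: "\<And>n. z n \<in> l2"
    and zb: "\<And>n. infsum (\<lambda>i. (z n i)\<^sup>2) UNIV \<le> C"
  shows "\<exists>B. \<forall>n. norm (D (z n)) \<le> B"
proof (rule ccontr)
  assume "\<not> ?thesis"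
  then have "\<forall>k::nat. \<exists>n. norm (D (z n)) > real k" by (meson not_le)
  then obtain s where s: "\<And>k. norm (D (z (s k))) > real k" by metis
  obtain r a where r: "strict_mono r" and w: "l2_wconv (\<lambda>n. z (s (r n))) a"
    using l2_weak_compact[of "\<lambda>n. z (s n)" C] zl zb by blast
  have "hwconv (\<lambda>n. D (z (s (r n)))) (D a)"
    using A5 w unfolding weakly_seq_cont_dec_def by blast
  then obtain B where B: "\<And>n. norm (D (z (s (r n)))) \<le> B" using ub_weak by blast
  obtain n :: nat where n: "B \<le> real n" using real_arch_simple by blast
  have "real n \<le> real (r n)" using seq_suble[OF r, of n] by simp
  then show False using s[of "r n"] B[of n] n by linarith
qed

theorem mainTheorem1:
  fixes K :: "'x::{real_inner,complete_space} \<Rightarrow> 'y::{real_inner,complete_space}"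
    and E :: "'x \<Rightarrow> ('l::countable \<Rightarrow> real)"
    and D :: "('l \<Rightarrow> real) \<Rightarrow> 'x"
    and \<psi> :: "('l \<Rightarrow> real) \<Rightarrow> ennreal"
    and c :: real
  assumes A3: "weakly_seq_cont K"
    and A4: "weakly_seq_cont_enc E"
    and A5: "weakly_seq_cont_dec D"
    and A6: "coercive_l2 \<psi>" "weakly_seq_lsc_l2 \<psi>"
    and c_pos: "c > 0"
  shows "coercive (aNETT_reg \<psi> E D c)"
  unfolding coercive_def
proof (intro allI impI)
  fix xs :: "nat \<Rightarrow> 'x"
  assume "\<exists>M. \<forall>n. aNETT_reg \<psi> E D c (xs n) \<le> ennreal M"
  then obtain M where M: "\<And>n. aNETT_reg \<psi> E D c (xs n) \<le> ennreal M" by blast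
  define M' where "M' = max M 0"
  have M': "\<And>n. aNETT_reg \<psi> E D c (xs n) \<le> ennreal M'"
    using M order.trans ennreal_leI unfolding M'_def by (metis max.cobounded1)
  have M'0: "M' \<ge> 0" unfolding M'_def by simp
  define z where "z n = E (xs n)" for n
  have zl: "z n \<in> l2" for n using A4 unfolding weakly_seq_cont_enc_def z_def by blast
  have "\<psi> (z n) \<le> ennreal M'" for n
  proof -
    have "\<psi> (z n) \<le> aNETT_reg \<psi> E D c (xs n)" unfolding aNETT_reg_def z_def by simp
    then show ?thesis using M'[of n] by (rule order.trans)
  qed
  then obtain B1 where B1: "\<And>n. l2_norm (z n) \<le> B1"
    using A6(1) zl unfolding coercive_l2_def by blast
  have zb: "infsum (\<lambda>i. (z n i)\<^sup>2) UNIV \<le> B1\<^sup>2" for n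
  proof -
    have nn: "infsum (\<lambda>i. (z n i)\<^sup>2) UNIV \<ge> 0" by (rule l2_infsum_nonneg)
    have "l2_norm (z n) \<ge> 0" unfolding l2_norm_def using nn by simp
    then have "(l2_norm (z n))\<^sup>2 \<le> B1\<^sup>2" using B1[of n] by (intro power_mono) auto
    then show ?thesis unfolding l2_norm_def using nn by simp
  qed
  obtain B2 where B2: "\<And>n. norm (D (z n)) \<le> B2"
    using dec_bounded[where D=D and z=z and C="B1\<^sup>2"] A5 zl zb by blast
  have rb: "norm (xs n - D (z n)) \<le> sqrt (2 * M' / c)" for n
  proof -
    have "ennreal (c / 2 * (norm (xs n - D (z n)))\<^sup>2) \<le> aNETT_reg \<psi> E D c (xs n)"
      unfolding aNETT_reg_def z_def by simp
    then have "ennreal (c / 2 * (norm (xs n - D (z n)))\<^sup>2) \<le> ennreal M'" using M'[of n] by (rule order.trans)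
    then have "c / 2 * (norm (xs n - D (z n)))\<^sup>2 \<le> M'" using M'0 ennreal_le_iff by blast
    then have "(norm (xs n - D (z n)))\<^sup>2 \<le> 2 * M' / c" using c_pos by (simp add: field_simps)
    then have "sqrt ((norm (xs n - D (z n)))\<^sup>2) \<le> sqrt (2 * M' / c)" by (rule real_sqrt_le_mono)
    then show ?thesis by simp
  qed
  have "norm (xs n) \<le> sqrt (2 * M' / c) + B2" for n
  proof -
    have "norm (xs n) = norm ((xs n - D (z n)) + D (z n))" by simp
    also have "\<dots> \<le> norm (xs n - D (z n)) + norm (D (z n))" by (rule norm_triangle_ineq)
    finally show ?thesis using rb[of n] B2[of n] by linarith
  qed
  then show "\<exists>B. \<forall>n. norm (xs n) \<le> B" by blast
qed


end
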